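(* Assume $f_6=1$ and $\theta_i\ne0$. For every point $\xi\in\mathbb P^3$, the plane with dual coordinates $W_i(\xi)=A_i\xi$ is the polar plane of $\xi$ with respect to the linear complex $\mathcal L_i$; that is, it passes through $\xi$, and a line through $\xi$ lies in this plane if and only if it belongs to $\mathcal L_i$.
   Context: Work over an algebraically closed field of characteristic $\neq2$. $F(X)=\sum_{j=0}^6f_jX^j=\prod_{j=1}^6(X-\theta_j)$ with distinct roots. $A_i$ is the antisymmetric matrix $$A_i=\begin{pmatrix}0&-f_1-\frac{2f_0}{\theta_i}&a_{13}&\theta_i^2\\ f_1+\frac{2f_0}{\theta_i}&0&\theta_i^2(f_5+2\theta_i)&-\theta_i\\ -a_{13}&-\theta_i^2(f_5+2\theta_i)&0&1\\ -\theta_i^2&\theta_i&-1&0\end{pmatrix},\quad a_{13}=\theta_i(f_3+2f_4\theta_i+2f_5\theta_i^2+2\theta_i^3),$$ and $W_i(\xi)=A_i\xi$ ($\xi$ a column vector) is read as dual coordinates of a plane $\sum_j w_j\xi_j=0$. Lines in $\mathbb P^3$ have Grassmann coordinates $(X_1:\dots:X_6)=(p_{43}:p_{24}:p_{41}:p_{21}:p_{31}:p_{32})$, $p_{jl}=u_jv_l-u_lv_j$ for the line through $u,v$. Define the linear forms $p_0=X_1+f_1X_4$, $p_1=X_2+2f_2X_4+f_3X_5$, $p_2=X_3+2f_4X_5+2f_3X_4+f_5X_6$, $p_3=2f_4X_4+2f_5X_5+2X_6$, $p_4=2f_5X_4+2X_5$, $p_5=2X_4$. The linear complex $\mathcal L_i$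 is the set of lines whose Grassmann coordinates satisfy $\sum_{j=0}^5p_j\theta_i^j=0$. The polar plane of a point $\xi$ with respect to a linear complex is the plane containing all lines of the complex through $\xi$. *)

theory Defs
  imports "HOL-Computational_Algebra.Polynomial"
begin

text \<open>Points of P^3 are represented by nonzero coordinate vectors
  \<xi> :: nat \<Rightarrow> 'a, using only the indices 1..4.\<close>

definition a13 :: "(nat \<Rightarrow> 'a::field) \<Rightarrow> 'a \<Rightarrow> 'a" where
  "a13 f t = t * (f 3 + 2 * f 4 * t + 2 * f 5 * t^2 + 2 * t^3)"

text \<open>Entries of the antisymmetric matrix A_i (with theta_i = t), indices 1..4.\<close>
definition Amat :: "(nat \<Rightarrow> 'a::field) \<Rightarrow> 'a \<Rightarrow> nat \<Rightarrow> nat \<Rightarrow> 'a" where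
  "Amat f t r c =
    (if (r, c) = (1, 2) then - f 1 - 2 * f 0 / t
     else if (r, c) = (1, 3) then a13 f t
     else if (r, c) = (1, 4) then t^2
     else if (r, c) = (2, 1) then f 1 + 2 * f 0 / t
     else if (r, c) = (2, 3) then t^2 * (f 5 + 2 * t)
     else if (r, c) = (2, 4) then - t
     else if (r, c) = (3, 1) then - a13 f t
     else if (r, c) = (3, 2) then - (t^2 * (f 5 + 2 * t))
     else if (r, c) = (3, 4) then 1
     else if (r, c) = (4, 1) then - (t^2)
     else if (r, c) = (4, 2) then t
     else if (r, c) = (4, 3) then -1
     else 0)"

definition Wvec :: "(nat \<Rightarrow> 'a::field) \<Rightarrow> 'a \<Rightarrow> (nat \<Rightarrow> 'a) \<Rightarrow> nat \<Rightarrow> 'a" where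
  "Wvec f t \<xi> r = (\<Sum>c = 1..4. Amat f t r c * \<xi> c)"

definition on_plane :: "(nat \<Rightarrow> 'a::field) \<Rightarrow> (nat \<Rightarrow> 'a) \<Rightarrow> bool" where
  "on_plane w x \<longleftrightarrow> (\<Sum>j = 1..4. w j * x j) = 0"

definition pl :: "(nat \<Rightarrow> 'a::field) \<Rightarrow> (nat \<Rightarrow> 'a) \<Rightarrow> nat \<Rightarrow> nat \<Rightarrow> 'a" where
  "pl u v j l = u j * v l - u l * v j"

definition Grass :: "(nat \<Rightarrow> 'a::field) \<Rightarrow> (nat \<Rightarrow> 'a) \<Rightarrow> nat \<Rightarrow> 'a" where
  "Grass u v k =
    (if k = 1 then pl u v 4 3 else if k = 2 then pl u v 2 4
     else if k = 3 then pl u v 4 1 else if k = 4 then pl u v 2 1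
     else if k = 5 then pl u v 3 1 else if k = 6 then pl u v 3 2 else 0)"

definition pform :: "(nat \<Rightarrow> 'a::field) \<Rightarrow> (nat \<Rightarrow> 'a) \<Rightarrow> nat \<Rightarrow> 'a" where
  "pform f X j =
    (if j = 0 then X 1 + f 1 * X 4
     else if j = 1 then X 2 + 2 * f 2 * X 4 + f 3 * X 5
     else if j = 2 then X 3 + 2 * f 4 * X 5 + 2 * f 3 * X 4 + f 5 * X 6
     else if j = 3 then 2 * f 4 * X 4 + 2 * f 5 * X 5 + 2 * X 6
     else if j = 4 then 2 * f 5 * X 4 + 2 * X 5
     else if j = 5 then 2 * X 4 else 0)"

definition in_complex :: "(nat \<Rightarrow> 'a::field) \<Rightarrow> 'a \<Rightarrow> (nat \<Rightarrow> 'a) \<Rightarrow> bool" where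
  "in_complex f t X \<longleftrightarrow> (\<Sum>j = 0..5. pform f X j * t^j) = 0"

definition alg_closed_field :: "'a::field itself \<Rightarrow> bool" where
  "alg_closed_field _ \<longleftrightarrow> (\<forall>p :: 'a poly. degree p \<ge> 1 \<longrightarrow> (\<exists>x. poly p x = 0))"

end

theory Submission
  imports Defs
begin

lemma sum06: "(\<Sum>j = 0..6::nat. g j) = g 0 + g 1 + g 2 + g 3 + g 4 + g 5 + (g 6 :: 'a::comm_monoid_add)"
  by (simp add: eval_nat_numeral atLeast0_atMost_Suc add_ac)

lemma sum05: "(\<Sum>j = 0..5::nat. g j) = g 0 + g 1 + g 2 + g 3 + g 4 + (g 5 :: 'a::comm_monoid_add)"
  by (simp add: eval_nat_numeral atLeast0_atMost_Suc add_ac)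

lemma sum14: "(\<Sum>j = 1..4::nat. g j) = g 1 + g 2 + g 3 + (g 4 :: 'a::comm_monoid_add)"
proof -
  have "{1..4::nat} = {1,2,3,4}" by auto
  then show ?thesis by (simp add: add_ac)
qed

lemma alg_closed_infinite:
  assumes "alg_closed_field TYPE('a::field)"
  shows "infinite (UNIV :: 'a set)"
proof
  assume fin: "finite (UNIV :: 'a set)"
  define q :: "'a poly" where "q = (\<Prod>a\<in>UNIV. [:-a, 1:])"
  have dq: "degree q = card (UNIV :: 'a set)"
    unfolding q_def by (subst degree_prod_eq_sum_degree) auto
  have "card (UNIV :: 'a set) \<ge> 1" using fin by (simp add: Suc_le_eq card_gt_0_iff)
  then have "degree (q + 1) \<ge> 1"
    using dq by (subst add.commute, subst degree_add_eq_right) auto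
  then obtain x where "poly (q + 1) x = 0"
    using assms unfolding alg_closed_field_def by blast
  moreover have "poly q x = 0"
    unfolding q_def poly_prod using fin by (intro prod_zero) auto
  ultimately show False by simp
qed

lemma pf4:
  fixes a b c d e g x1 x2 x3 x4 :: "'a::field"
  assumes "a*x2 + b*x3 + c*x4 = 0" "-a*x1 + d*x3 + e*x4 = 0"
    "-b*x1 - d*x2 + g*x4 = 0" "-c*x1 - e*x2 - g*x3 = 0"
    "a*g - b*e + c*d \<noteq> 0"
  shows "x1 = 0 \<and> x2 = 0 \<and> x3 = 0 \<and> x4 = 0"
proof -
  let ?P = "a*g - b*e + c*d"
  have "?P * x1 = -(g*(-a*x1 + d*x3 + e*x4) - e*(-b*x1 - d*x2 + g*x4) + d*(-c*x1 - e*x2 - g*x3))"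
    by (simp add: algebra_simps)
  hence 1: "?P * x1 = 0" using assms by simp
  have "?P * x2 = g*(a*x2 + b*x3 + c*x4) - c*(-b*x1 - d*x2 + g*x4) + b*(-c*x1 - e*x2 - g*x3)"
    by (simp add: algebra_simps)
  hence 2: "?P * x2 = 0" using assms by simp
  have "?P * x3 = -(e*(a*x2 + b*x3 + c*x4) - c*(-a*x1 + d*x3 + e*x4) + a*(-c*x1 - e*x2 - g*x3))"
    by (simp add: algebra_simps)
  hence 3: "?P * x3 = 0" using assms by simp
  have "?P * x4 = d*(a*x2 + b*x3 + c*x4) - b*(-a*x1 + d*x3 + e*x4) + a*(-b*x1 - d*x2 + g*x4)"
    by (simp add: algebra_simps)
  hence 4: "?P * x4 = 0" using assms by simp
  show ?thesis using 1 2 3 4 assms(5) by simp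
qed

lemma deriv_nonzero:
  fixes f \<theta> :: "nat \<Rightarrow> 'a::field"
  assumes alg: "alg_closed_field TYPE('a)"
    and F: "\<forall>x. (\<Sum>j = 0..6. f j * x^j) = (\<Prod>j = 1..6. (x - \<theta> j))"
    and inj: "inj_on \<theta> {1..6}"
    and i: "i \<in> {1..6}"
  shows "f 1 + 2*f 2*\<theta> i + 3*f 3*\<theta> i^2 + 4*f 4*\<theta> i^3 + 5*f 5*\<theta> i^4 + 6*f 6*\<theta> i^5 \<noteq> 0"
proof -
  define t where "t = \<theta> i"
  define P :: "'a poly" where "P = (\<Sum>j = 0..6. monom (f j) j)"
  define Q :: "'a poly" where "Q = (\<Prod>j = 1..6. [:- \<theta> j, 1:])"
  have pe: "poly P x = poly Q x" for x
    unfolding P_def Q_def poly_sum poly_monom poly_prod using F by simp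
  have PQ: "P = Q"
  proof (rule ccontr)
    assume "P \<noteq> Q"
    hence "P - Q \<noteq> 0" by simp
    hence "finite {x. poly (P - Q) x = 0}" by (rule poly_roots_finite)
    moreover have "{x. poly (P - Q) x = 0} = UNIV" using pe by auto
    ultimately show False using alg_closed_infinite[OF alg] by simp
  qed
  have "poly (pderiv P) t = (\<Sum>j = 0..6::nat. of_nat j * f j * t^(j-1))"
    unfolding P_def using higher_pderiv_sum[of 1 "\<lambda>j. monom (f j) j" "{0..6::nat}"]
    by (simp add: poly_sum pderiv_monom poly_monom)
  also have "\<dots> = f 1 + 2*f 2*t + 3*f 3*t^2 + 4*f 4*t^3 + 5*f 5*t^4 + 6*f 6*t^5"
    by (simp add: sum06 eval_nat_numeral)
  finally have d1: "poly (pderiv P) t = f 1 + 2*f 2*t + 3*f 3*t^2 + 4*f 4*t^3 + 5*f 5*t^4 + 6*f 6*t^5" .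
  have "poly (pderiv Q) t = (\<Sum>a\<in>{1..6}. (\<Prod>b\<in>{1..6} - {a}. (t - \<theta> b)))"
    unfolding Q_def pderiv_prod poly_sum poly_mult poly_prod by (simp add: pderiv_pCons)
  also have "\<dots> = (\<Prod>b\<in>{1..6} - {i}. (t - \<theta> b))"
  proof -
    have "(\<Sum>a\<in>{1..6}. (\<Prod>b\<in>{1..6} - {a}. (t - \<theta> b))) =
          (\<Prod>b\<in>{1..6} - {i}. (t - \<theta> b)) + (\<Sum>a\<in>{1..6} - {i}. (\<Prod>b\<in>{1..6} - {a}. (t - \<theta> b)))"
      using i by (simp add: sum.remove)
    moreover have "(\<Sum>a\<in>{1..6} - {i}. (\<Prod>b\<in>{1..6::nat} - {a}. (t - \<theta> b))) = 0"
    proof (rule sum.neutral, intro ballI)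
      fix a assume "a \<in> {1..6::nat} - {i}"
      thus "(\<Prod>b\<in>{1..6} - {a}. (t - \<theta> b)) = 0"
        using i unfolding t_def by (intro prod_zero) auto
    qed
    ultimately show ?thesis by simp
  qed
  also have "\<dots> \<noteq> 0"
  proof -
    have "\<forall>b\<in>{1..6} - {i}. t - \<theta> b \<noteq> 0"
      using inj i unfolding t_def inj_on_def by auto
    thus ?thesis by simp
  qed
  finally have "poly (pderiv Q) t \<noteq> 0" .
  thus ?thesis using d1 PQ unfolding t_def by simp
qed

theorem mainTheorem7:
  fixes f :: "nat \<Rightarrow> 'a::field" and \<theta> :: "nat \<Rightarrow> 'a" and i :: nat
  assumes "alg_closed_field TYPE('a)"
    and "(2::'a) \<noteq> 0"
    and "\<forall>x. (\<Sum>j = 0..6. f j * x^j) = (\<Prod>j = 1..6. (x - \<theta> j))"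
    and "inj_on \<theta> {1..6}"
    and "f 6 = 1"
    and "i \<in> {1..6}"
    and "\<theta> i \<noteq> 0"
  shows "\<forall>\<xi>. (\<exists>j\<in>{1..4}. \<xi> j \<noteq> 0) \<longrightarrow>
           (\<exists>j\<in>{1..4}. Wvec f (\<theta> i) \<xi> j \<noteq> 0)
         \<and> on_plane (Wvec f (\<theta> i) \<xi>) \<xi>
         \<and> (\<forall>v. (\<forall>c. \<exists>j\<in>{1..4}. v j \<noteq> c * \<xi> j) \<longrightarrow>
               ((\<forall>a b. on_plane (Wvec f (\<theta> i) \<xi>) (\<lambda>j. a * \<xi> j + b * v j))
                \<longleftrightarrow> in_complex f (\<theta> i) (Grass \<xi> v)))"
proof (intro allI impI conjI)
  fix \<xi> :: "nat \<Rightarrow> 'a"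
  assume nz: "\<exists>j\<in>{1..4}. \<xi> j \<noteq> 0"
  define t where "t = \<theta> i"
  have t0: "t \<noteq> 0" using assms(7) t_def by simp
  have "(\<Prod>j = 1..6. (t - \<theta> j)) = 0"
    using assms(6) unfolding t_def by (intro prod_zero) auto
  hence Ft: "f 0 + f 1 * t + f 2 * t^2 + f 3 * t^3 + f 4 * t^4 + f 5 * t^5 + t^6 = 0"
    using assms(3,5) by (simp add: sum06)
  hence f0: "f 0 = -(f 1 * t + f 2 * t^2 + f 3 * t^3 + f 4 * t^4 + f 5 * t^5 + t^6)"
    by (simp add: algebra_simps eq_neg_iff_add_eq_0)
  have D: "f 1 + 2*f 2*t + 3*f 3*t^2 + 4*f 4*t^3 + 5*f 5*t^4 + 6*t^5 \<noteq> 0"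
    using deriv_nonzero[OF assms(1,3,4,6)] assms(5) unfolding t_def by simp
  let ?a = "- f 1 - 2 * f 0 / t" and ?b = "a13 f t" and ?c = "t^2"
  let ?d = "t^2 * (f 5 + 2 * t)" and ?e = "- t" and ?g = "1::'a"
  have Wv: "Wvec f t \<xi> 1 = ?a * \<xi> 2 + ?b * \<xi> 3 + ?c * \<xi> 4"
           "Wvec f t \<xi> 2 = -?a * \<xi> 1 + ?d * \<xi> 3 + ?e * \<xi> 4"
           "Wvec f t \<xi> 3 = -?b * \<xi> 1 - ?d * \<xi> 2 + ?g * \<xi> 4"
           "Wvec f t \<xi> 4 = -?c * \<xi> 1 - ?e * \<xi> 2 - ?g * \<xi> 3"
    unfolding Wvec_def sum14 Amat_def by simp_all
  have Pf: "?a * ?g - ?b * ?e + ?c * ?d = f 1 + 2*f 2*t + 3*f 3*t^2 + 4*f 4*t^3 + 5*f 5*t^4 + 6*t^5"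
    using t0 unfolding f0 a13_def by (simp add: field_simps) (simp add: algebra_simps power2_eq_square power3_eq_cube eval_nat_numeral)
  show "\<exists>j\<in>{1..4}. Wvec f (\<theta> i) \<xi> j \<noteq> 0"
  proof (rule ccontr)
    assume "\<not> ?thesis"
    hence "\<forall>j\<in>{1..4}. Wvec f t \<xi> j = 0" unfolding t_def by simp
    hence W0: "Wvec f t \<xi> 1 = 0" "Wvec f t \<xi> 2 = 0" "Wvec f t \<xi> 3 = 0" "Wvec f t \<xi> 4 = 0" by auto
    have "\<xi> 1 = 0 \<and> \<xi> 2 = 0 \<and> \<xi> 3 = 0 \<and> \<xi> 4 = 0"
    proof (rule pf4[where a="?a" and b="?b" and c="?c" and d="?d" and e="?e" and g="?g"])
      show "?a * ?g - ?b * ?e + ?c * ?d \<noteq> 0" unfolding Pf by (rule D)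
    qed (use Wv W0 in simp)+
    moreover have "{1..4::nat} = {1,2,3,4}" by auto
    ultimately show False using nz by auto
  qed
  have onx: "(\<Sum>j = 1..4. Wvec f t \<xi> j * \<xi> j) = 0"
    unfolding sum14 Wv by (simp add: algebra_simps)
  thus "on_plane (Wvec f (\<theta> i) \<xi>) \<xi>" unfolding on_plane_def t_def .
  fix v :: "nat \<Rightarrow> 'a"
  define X where "X = Grass \<xi> v"
  have Xv: "X 1 = pl \<xi> v 4 3" "X 2 = pl \<xi> v 2 4" "X 3 = pl \<xi> v 4 1"
     "X 4 = pl \<xi> v 2 1" "X 5 = pl \<xi> v 3 1" "X 6 = pl \<xi> v 3 2"
    unfolding X_def Grass_def by simp_all
  have b1: "(\<Sum>j = 1..4. Wvec f t \<xi> j * v j) = ?a * X 4 + ?b * X 5 + t^2 * X 3 + ?d * X 6 + t * X 2 + X 1"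
    unfolding sum14 Wv Xv pl_def by (simp add: algebra_simps)
  have b2: "(\<Sum>j = 0..5. pform f X j * t^j) =
     (f 1 + 2*f 2*t + 2*f 3*t^2 + 2*f 4*t^3 + 2*f 5*t^4 + 2*t^5) * X 4
     + (f 3 * t + 2*f 4*t^2 + 2*f 5*t^3 + 2*t^4) * X 5 + t^2 * X 3
     + (f 5 * t^2 + 2*t^3) * X 6 + t * X 2 + X 1"
    unfolding sum05 pform_def by (simp add: algebra_simps eval_nat_numeral)
  have ea: "?a = f 1 + 2*f 2*t + 2*f 3*t^2 + 2*f 4*t^3 + 2*f 5*t^4 + 2*t^5"
    using t0 unfolding f0 by (simp add: field_simps eval_nat_numeral)
  have eb: "?b = f 3 * t + 2*f 4*t^2 + 2*f 5*t^3 + 2*t^4"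
    unfolding a13_def by (simp add: algebra_simps eval_nat_numeral)
  have ed: "?d = f 5 * t^2 + 2*t^3"
    by (simp add: algebra_simps eval_nat_numeral)
  have bil: "(\<Sum>j = 1..4. Wvec f t \<xi> j * v j) = (\<Sum>j = 0..5. pform f (Grass \<xi> v) j * t^j)"
    unfolding X_def[symmetric] b1 b2 ea eb ed ..
  have lin: "on_plane (Wvec f t \<xi>) (\<lambda>j. a * \<xi> j + b * v j) \<longleftrightarrow>
        a * (\<Sum>j = 1..4. Wvec f t \<xi> j * \<xi> j) + b * (\<Sum>j = 1..4. Wvec f t \<xi> j * v j) = 0" for a b
    unfolding on_plane_def sum14 by (simp add: algebra_simps)
  show "(\<forall>a b. on_plane (Wvec f (\<theta> i) \<xi>) (\<lambda>j. a * \<xi> j + b * v j))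
                \<longleftrightarrow> in_complex f (\<theta> i) (Grass \<xi> v)"
    unfolding t_def[symmetric] lin onx in_complex_def bil[symmetric]
    apply (rule iffI)
     apply (drule spec[where x=0], drule spec[where x=1], simp)
    apply simp
    done
qed

end
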